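(* Let $M$ be a generic regular closed curve with arc-length parameterization $f$. Then the number of elements of the sequence of division points $\mathcal{S}_M$ is even.
   Context: Generic means $f$ lies in the set $\mathcal{G}$: $f$ is regular with only transversal self-crossings, only non-degenerate inflexion points (curvature changes sign and $\det(f',f''')\ne0$) and no undulation points; at least one point of each parallel pair is not an inflexion point; and further finitely many non-degeneracy conditions on parallel pairs (involving curvature, its first two arc-length derivatives, and collinearity of chords) hold. Two distinct points of $M$ form a parallel pair if their tangent lines are parallel. The sequence of division points $\mathcal{S}_M$: if $M$ has inflexion points, it is the set of all parameters $s$ such that $f(s)$ is an inflexion point or the tangent line at $f(s)$ is parallel to the tangent line at some inflexion point; if $M$ has no inflexion points, it is the set of all $s$ with $f'(s)$ parallel to $f'(s_0)$ for a fixed $s_0$ (including $s_0$); in both cases ordered compatibly with the orientation of $M$. *)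

theory Defs
  imports "HOL-Analysis.Analysis"
begin

definition Dk :: "nat \<Rightarrow> (real \<Rightarrow> real^2) \<Rightarrow> real \<Rightarrow> real^2" where
  "Dk k f s = (\<chi> i. (deriv ^^ k) (\<lambda>t. f t $ i) s)"

definition smooth_curve :: "(real \<Rightarrow> real^2) \<Rightarrow> bool" where
  "smooth_curve f \<longleftrightarrow> (\<forall>k i s. (deriv ^^ k) (\<lambda>t. f t $ i) differentiable (at s))"

definition det2 :: "real^2 \<Rightarrow> real^2 \<Rightarrow> real" where
  "det2 u v = u $ 1 * v $ 2 - u $ 2 * v $ 1"

definition arclength_closed_curve :: "(real \<Rightarrow> real^2) \<Rightarrow> real \<Rightarrow> bool" where
  "arclength_closed_curve f L \<longleftrightarrow>
     smooth_curve f \<and> L > 0 \<and> (\<forall>s. f (s + L) = f s) \<and>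
     (\<forall>p. 0 < p \<and> p < L \<longrightarrow> (\<exists>s. f (s + p) \<noteq> f s)) \<and>
     (\<forall>s. norm (Dk 1 f s) = 1)"

text \<open>Signed curvature of a unit-speed curve.\<close>
definition curvature :: "(real \<Rightarrow> real^2) \<Rightarrow> real \<Rightarrow> real" where
  "curvature f s = det2 (Dk 1 f s) (Dk 2 f s)"

definition sign_change :: "(real \<Rightarrow> real) \<Rightarrow> real \<Rightarrow> bool" where
  "sign_change g s \<longleftrightarrow>
     (\<exists>e>0. \<forall>t u. s - e < t \<and> t < s \<and> s < u \<and> u < s + e \<longrightarrow> g t * g u < 0)"

definition inflexion :: "(real \<Rightarrow> real^2) \<Rightarrow> real \<Rightarrow> bool" where
  "inflexion f s \<longleftrightarrow> curvature f s = 0 \<and> sign_change (curvature f) s"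

text \<open>Undulation point: tangent line with contact of order at least 4.\<close>
definition undulation :: "(real \<Rightarrow> real^2) \<Rightarrow> real \<Rightarrow> bool" where
  "undulation f s \<longleftrightarrow> curvature f s = 0 \<and> det2 (Dk 1 f s) (Dk 3 f s) = 0"

definition generic :: "(real \<Rightarrow> real^2) \<Rightarrow> real \<Rightarrow> bool" where
  "generic f L \<longleftrightarrow>
     (\<forall>s\<in>{0..<L}. \<forall>t\<in>{0..<L}. s \<noteq> t \<and> f s = f t \<longrightarrow> det2 (Dk 1 f s) (Dk 1 f t) \<noteq> 0) \<and>
     (\<forall>s. curvature f s = 0 \<longrightarrow> inflexion f s \<and> det2 (Dk 1 f s) (Dk 3 f s) \<noteq> 0) \<and>
     (\<forall>s. \<not> undulation f s) \<and>
     (\<forall>s\<in>{0..<L}. \<forall>t\<in>{0..<L}. f s \<noteq> f t \<and> det2 (Dk 1 f s) (Dk 1 f t) = 0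
        \<longrightarrow> \<not> inflexion f s \<or> \<not> inflexion f t)"

text \<open>The sequence of division points S_M, as a set of parameters in [0,L).\<close>
definition division_points :: "(real \<Rightarrow> real^2) \<Rightarrow> real \<Rightarrow> real \<Rightarrow> real set" where
  "division_points f L s0 =
     (if \<exists>t\<in>{0..<L}. inflexion f t
      then {s\<in>{0..<L}. inflexion f s \<or>
              (\<exists>t\<in>{0..<L}. inflexion f t \<and> det2 (Dk 1 f s) (Dk 1 f t) = 0)}
      else {s\<in>{0..<L}. det2 (Dk 1 f s) (Dk 1 f s0) = 0})"

end

theory Submission
  imports Defs
begin

definition sp :: "(real \<Rightarrow> real) \<Rightarrow> real \<Rightarrow> bool" where
  "sp g s \<longleftrightarrow>
     (\<exists>e>0. \<forall>t u. s - e < t \<and> t < s \<and> s < u \<and> u < s + e \<longrightarrow> g t * g u > 0)"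

lemma prod_pos_iff: "(x::real) \<noteq> 0 \<Longrightarrow> y \<noteq> 0 \<Longrightarrow> x * y > 0 \<longleftrightarrow> (x > 0 \<longleftrightarrow> y > 0)"
  by (smt (verit) mult_neg_neg mult_pos_pos mult_neg_pos mult_pos_neg)

lemma prod_neg_iff: "(x::real) \<noteq> 0 \<Longrightarrow> y \<noteq> 0 \<Longrightarrow> x * y < 0 \<longleftrightarrow> \<not>(x > 0 \<longleftrightarrow> y > 0)"
  by (smt (verit) mult_neg_neg mult_pos_pos mult_neg_pos mult_pos_neg)

lemma nozero_sign:
  fixes h :: "real \<Rightarrow> real"
  assumes "continuous_on {a..b} h" "a \<le> b" "\<forall>x\<in>{a..b}. h x \<noteq> 0"
  shows "h a * h b > 0"
proof (rule ccontr)
  assume "\<not> h a * h b > 0"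
  moreover have "h a \<noteq> 0" "h b \<noteq> 0" using assms by auto
  ultimately have "(h a < 0 \<and> h b > 0) \<or> (h a > 0 \<and> h b < 0)"
    by (smt (verit) mult_neg_neg mult_pos_pos)
  then obtain x where "a \<le> x" "x \<le> b" "h x = 0"
    using IVT'[of h a 0 b] IVT2'[of h b 0 a] assms by force
  then show False using assms by auto
qed

lemma sc_sp_nz:
  assumes "sign_change h z \<or> sp h z"
  shows "\<exists>e>0. \<forall>t u. z - e < t \<and> t < z \<and> z < u \<and> u < z + e \<longrightarrow> h t * h u \<noteq> 0"
  using assms unfolding sign_change_def sp_def by (metis less_irrefl)

lemma parity_interval:
  fixes h :: "real \<Rightarrow> real"
  assumes cont: "continuous_on UNIV h" and loc: "\<forall>z. h z = 0 \<longrightarrow> sign_change h z \<or> sp h z"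
  shows "finite {z\<in>{a<..<b}. h z = 0} \<Longrightarrow> a < b \<Longrightarrow> h a \<noteq> 0 \<Longrightarrow> h b \<noteq> 0 \<Longrightarrow>
     (h a * h b > 0 \<longleftrightarrow> even (card {z\<in>{a<..<b}. h z = 0 \<and> sign_change h z}))"
proof (induction "card {z\<in>{a<..<b}. h z = 0}" arbitrary: b rule: less_induct)
  case less
  define Z where "Z = {z\<in>{a<..<b}. h z = 0}"
  have finZ: "finite Z" using less Z_def by simp
  show ?case
  proof (cases "Z = {}")
    case True
    have "h a * h b > 0"
      using nozero_sign[of a b h] cont less True Z_def
      by (smt (verit, best) continuous_on_subset empty_iff greaterThanLessThan_iff mem_Collect_eq subset_UNIV atLeastAtMost_iff)
    moreover have "{z\<in>{a<..<b}. h z = 0 \<and> sign_change h z} = {}" using True Z_def by auto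
    ultimately show ?thesis by (metis card.empty even_zero)
  next
    case False
    define z where "z = Max Z"
    have zZ: "z \<in> Z" using False finZ z_def by simp
    have zmax: "\<And>y. y \<in> Z \<Longrightarrow> y \<le> z" using finZ z_def by simp
    have az: "a < z" and zb: "z < b" and hz: "h z = 0" using zZ Z_def by auto
    obtain e where e: "e > 0" "\<forall>t u. z - e < t \<and> t < z \<and> z < u \<and> u < z + e \<longrightarrow> h t * h u \<noteq> 0"
      using sc_sp_nz loc hz by blast
    define R where "R = Z - {z}"
    have finR: "finite R" using finZ R_def by simp
    define m where "m = (if R = {} then a else Max R)"
    have Rm: "\<And>y. y \<in> R \<Longrightarrow> y \<le> m" using finR m_def by auto
    have mz: "a \<le> m \<and> m < z"
    proof (cases "R = {}")
      case True then show ?thesis using m_def az by simp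
    next
      case False
      then have "Max R \<in> R" using finR by simp
      then have "Max R \<in> Z" "Max R \<noteq> z" using R_def by auto
      then have "Max R < z" "a < Max R" using zmax Z_def by force+
      then show ?thesis using m_def False by simp
    qed
    define t where "t = max (z - e/2) ((m+z)/2)"
    define u where "u = min (z + e/2) ((z+b)/2)"
    have t1: "a < t" "t < z" "z - e < t" using t_def mz e az by (auto simp: max_def)
    have u1: "z < u" "u < b" "u < z + e" using u_def e zb by (auto simp: min_def)
    have htu: "h t * h u \<noteq> 0" using e t1 u1 by blast
    have ht: "h t \<noteq> 0" and hu: "h u \<noteq> 0" using htu by auto
    have Zt: "{y\<in>{a<..<t}. h y = 0} = R"
    proof
      show "{y\<in>{a<..<t}. h y = 0} \<subseteq> R" using R_def Z_def t1 zb by auto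
      show "R \<subseteq> {y\<in>{a<..<t}. h y = 0}"
      proof
        fix y assume "y \<in> R"
        then have "y \<le> m" "y \<in> Z" using Rm R_def by auto
        moreover have "m < t" using t_def mz by (auto simp: max_def)
        ultimately show "y \<in> {y\<in>{a<..<t}. h y = 0}" using Z_def by auto
      qed
    qed
    have cardR: "card R < card Z" using finZ zZ R_def by (metis card_Diff1_less)
    have IH: "h a * h t > 0 \<longleftrightarrow> even (card {y\<in>{a<..<t}. h y = 0 \<and> sign_change h y})"
      using less.hyps[of t] cardR Zt Z_def finR t1 less.prems ht by simp
    have hub: "h u * h b > 0"
    proof (rule nozero_sign[of u b h])
      show "continuous_on {u..b} h" using cont continuous_on_subset by blast
      show "u \<le> b" using u1 by simp
      show "\<forall>x\<in>{u..b}. h x \<noteq> 0"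
      proof
        fix x assume x: "x \<in> {u..b}"
        show "h x \<noteq> 0"
        proof
          assume hx: "h x = 0"
          then have "x \<noteq> b" using less.prems by auto
          then have "x \<in> Z" using x hx Z_def u1 az by auto
          then show False using zmax x u1 by fastforce
        qed
      qed
    qed
    define SC where "SC = {y\<in>{a<..<t}. h y = 0 \<and> sign_change h y}"
    have finSC: "finite SC" using finR Zt SC_def by (metis (mono_tags, lifting) finite_subset mem_Collect_eq subsetI)
    have zSC: "z \<notin> SC" using SC_def t1 by auto
    have SCb: "{y\<in>{a<..<b}. h y = 0 \<and> sign_change h y} = SC \<union> (if sign_change h z then {z} else {})"
    proof -
      have "\<And>y. y \<in> {a<..<b} \<Longrightarrow> h y = 0 \<Longrightarrow> y \<noteq> z \<Longrightarrow> y < t"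
      proof -
        fix y assume "y \<in> {a<..<b}" "h y = 0" "y \<noteq> z"
        then have "y \<in> R" using R_def Z_def by auto
        then have "y \<in> {y\<in>{a<..<t}. h y = 0}" using Zt by simp
        then show "y < t" by simp
      qed
      then show ?thesis using SC_def t1 az zb hz by (auto split: if_splits)
    qed
    show ?thesis
    proof (cases "sign_change h z")
      case True
      have "h t * h u < 0" using True unfolding sign_change_def
      proof -
        from True obtain e' where "e' > 0" "\<forall>t u. z - e' < t \<and> t < z \<and> z < u \<and> u < z + e' \<longrightarrow> h t * h u < 0"
          unfolding sign_change_def by blast
        note * = this
        define t' where "t' = max t (z - e'/2)"
        define u' where "u' = min u (z + e'/2)"
        have b4: "z - e' < t'" "t' < z" "z < u'" "u' < z + e'" "t \<le> t'" "u' \<le> u"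
          using * t1 u1 by (auto simp: t'_def u'_def max_def min_def)
        have "h t' * h u' < 0" using * b4 by blast
        moreover have "h t * h t' > 0"
          apply (rule nozero_sign[of _ _ h]) using cont continuous_on_subset apply blast
          using b4 apply simp
          using e t1 u1 b4 by (smt (verit, ccfv_threshold) atLeastAtMost_iff mult_eq_0_iff)
        moreover have "h u' * h u > 0"
          apply (rule nozero_sign[of _ _ h]) using cont continuous_on_subset apply blast
          using b4 apply simp
          using e t1 u1 b4 by (smt (verit, ccfv_threshold) atLeastAtMost_iff mult_eq_0_iff)
        ultimately show ?thesis
          using prod_pos_iff prod_neg_iff ht hu
          by (smt (verit) mult_eq_0_iff)
      qed
      moreover have "card {y\<in>{a<..<b}. h y = 0 \<and> sign_change h y} = Suc (card SC)"
        using SCb True finSC zSC by simp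
      ultimately show ?thesis using IH hub prod_pos_iff prod_neg_iff ht hu less.prems SC_def
        by (smt (verit) even_Suc)
    next
      case False
      then have "sp h z" using loc hz by blast
      have "h t * h u > 0"
      proof -
        from \<open>sp h z\<close> obtain e' where "e' > 0" "\<forall>t u. z - e' < t \<and> t < z \<and> z < u \<and> u < z + e' \<longrightarrow> h t * h u > 0"
          unfolding sp_def by blast
        note * = this
        define t' where "t' = max t (z - e'/2)"
        define u' where "u' = min u (z + e'/2)"
        have b4: "z - e' < t'" "t' < z" "z < u'" "u' < z + e'" "t \<le> t'" "u' \<le> u"
          using * t1 u1 by (auto simp: t'_def u'_def max_def min_def)
        have "h t' * h u' > 0" using * b4 by blast
        moreover have "h t * h t' > 0"
          apply (rule nozero_sign[of _ _ h]) using cont continuous_on_subset apply blast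
          using b4 apply simp
          using e t1 u1 b4 by (smt (verit, ccfv_threshold) atLeastAtMost_iff mult_eq_0_iff)
        moreover have "h u' * h u > 0"
          apply (rule nozero_sign[of _ _ h]) using cont continuous_on_subset apply blast
          using b4 apply simp
          using e t1 u1 b4 by (smt (verit, ccfv_threshold) atLeastAtMost_iff mult_eq_0_iff)
        ultimately show ?thesis
          using prod_pos_iff prod_neg_iff ht hu
          by (smt (verit) mult_eq_0_iff)
      qed
      moreover have "card {y\<in>{a<..<b}. h y = 0 \<and> sign_change h y} = card SC"
        using SCb False by simp
      ultimately show ?thesis using IH hub prod_pos_iff prod_neg_iff ht hu less.prems SC_def
        by (smt (verit))
    qed
  qed
qed

lemma left_nz:
  fixes h :: "real \<Rightarrow> real"
  assumes cont: "continuous_on UNIV h" and loc: "\<forall>z. h z = 0 \<longrightarrow> sign_change h z \<or> sp h z"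
  shows "\<exists>e>0. \<forall>y. x - e < y \<and> y < x \<longrightarrow> h y \<noteq> 0"
proof (cases "h x = 0")
  case True
  then obtain e where e: "e > 0" "\<forall>t u. x - e < t \<and> t < x \<and> x < u \<and> u < x + e \<longrightarrow> h t * h u \<noteq> 0"
    using sc_sp_nz loc by blast
  have "\<forall>y. x - e < y \<and> y < x \<longrightarrow> h y \<noteq> 0"
  proof (intro allI impI)
    fix y assume "x - e < y \<and> y < x"
    then have "h y * h (x + e/2) \<noteq> 0" using e(2)[rule_format, of y "x + e/2"] e(1) by linarith
    then show "h y \<noteq> 0" by auto
  qed
  then show ?thesis using e by blast
next
  case False
  have "continuous (at x) h" using cont by (simp add: continuous_on_eq_continuous_at)
  then obtain e where "e > 0" "\<forall>y. dist x y < e \<longrightarrow> h y \<noteq> 0"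
    using continuous_at_avoid False by blast
  then have "\<forall>y. x - e < y \<and> y < x \<longrightarrow> h y \<noteq> 0" by (auto simp: dist_real_def)
  then show ?thesis using \<open>e > 0\<close> by blast
qed

lemma isolated_zero:
  fixes h :: "real \<Rightarrow> real"
  assumes loc: "\<forall>z. h z = 0 \<longrightarrow> sign_change h z \<or> sp h z" and hx: "h x = 0"
  shows "\<exists>e>0. \<forall>y. y \<noteq> x \<and> dist y x < e \<longrightarrow> h y \<noteq> 0"
proof -
  obtain e where e: "e > 0" "\<forall>t u. x - e < t \<and> t < x \<and> x < u \<and> u < x + e \<longrightarrow> h t * h u \<noteq> 0"
    using sc_sp_nz loc hx by blast
  have "\<forall>y. y \<noteq> x \<and> dist y x < e \<longrightarrow> h y \<noteq> 0"
  proof (intro allI impI)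
    fix y assume y: "y \<noteq> x \<and> dist y x < e"
    show "h y \<noteq> 0"
    proof (cases "y < x")
      case True
      then have "x - e < y" using y by (auto simp: dist_real_def)
      then have "h y * h (x + e/2) \<noteq> 0" using e(2)[rule_format, of y "x + e/2"] e(1) True by linarith
      then show ?thesis by auto
    next
      case False
      then have "x < y" "y < x + e" using y by (auto simp: dist_real_def)
      then have "h (x - e/2) * h y \<noteq> 0" using e(2)[rule_format, of "x - e/2" y] e(1) by linarith
      then show ?thesis by auto
    qed
  qed
  then show ?thesis using e by blast
qed

lemma zeros_finite:
  fixes h :: "real \<Rightarrow> real"
  assumes cont: "continuous_on UNIV h" and loc: "\<forall>z. h z = 0 \<longrightarrow> sign_change h z \<or> sp h z"
  shows "finite {z\<in>{a..b}. h z = 0}"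
proof (rule ccontr)
  assume inf: "infinite {z\<in>{a..b}. h z = 0}"
  have sub: "{z\<in>{a..b}. h z = 0} \<subseteq> {a..b}" by blast
  have BW: "\<forall>T. infinite T \<and> T \<subseteq> {a..b} \<longrightarrow> (\<exists>x\<in>{a..b}. x islimpt T)"
    using compact_eq_Bolzano_Weierstrass[THEN iffD1, OF compact_Icc[of a b]] .
  obtain x where x: "x \<in> {a..b}" "x islimpt {z\<in>{a..b}. h z = 0}"
    using BW[rule_format, OF conjI[OF inf sub]] by blast
  have cl: "closed {z. h z = 0}" by (intro closed_Collect_eq cont continuous_on_const)
  have "x islimpt {z. h z = 0}" using x(2) by (rule islimpt_subset) blast
  then have hx: "h x = 0" using cl closed_limpt by blast
  obtain e where e: "e > 0" "\<forall>y. y \<noteq> x \<and> dist y x < e \<longrightarrow> h y \<noteq> 0"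
    using isolated_zero[OF loc hx] by blast
  obtain y where y: "y \<in> {z\<in>{a..b}. h z = 0}" "y \<noteq> x" "dist y x < e"
    using x(2) e(1) unfolding islimpt_approachable by blast
  then show False using e(2) by blast
qed

lemma parity_periodic:
  fixes h :: "real \<Rightarrow> real"
  assumes cont: "continuous_on UNIV h" and loc: "\<forall>z. h z = 0 \<longrightarrow> sign_change h z \<or> sp h z"
    and L: "L > 0" and per: "\<forall>s. h (s + L) = h s"
  shows "even (card {z\<in>{0..<L}. h z = 0 \<and> sign_change h z})"
proof -
  obtain e where e: "e > 0" "\<forall>y. 0 - e < y \<and> y < 0 \<longrightarrow> h y \<noteq> 0"
    using left_nz[OF cont loc] by blast
  define c where "c = - min e L / 2"
  have c: "-L < c" "c < 0" "-e < c" using c_def e L by (auto simp: min_def)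
  have hc: "h c \<noteq> 0" using e c by auto
  have hcL: "h (c + L) = h c" using per by simp
  have eqZ: "{z\<in>{c<..<c+L}. h z = 0} = {z\<in>{0..<L}. h z = 0}"
  proof
    show "{z\<in>{c<..<c+L}. h z = 0} \<subseteq> {z\<in>{0..<L}. h z = 0}"
    proof
      fix z assume z: "z \<in> {z\<in>{c<..<c+L}. h z = 0}"
      then have "\<not> z < 0" using e c by auto
      then show "z \<in> {z\<in>{0..<L}. h z = 0}" using z c by auto
    qed
    show "{z\<in>{0..<L}. h z = 0} \<subseteq> {z\<in>{c<..<c+L}. h z = 0}"
    proof
      fix z assume z: "z \<in> {z\<in>{0..<L}. h z = 0}"
      have "z < c + L"
      proof (rule ccontr)
        assume "\<not> z < c + L"
        then have "c \<le> z - L" "z - L < 0" using z by auto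
        moreover have "h (z - L) = 0" using per[rule_format, of "z - L"] z by simp
        ultimately show False using e c by force
      qed
      then show "z \<in> {z\<in>{c<..<c+L}. h z = 0}" using z c by auto
    qed
  qed
  have eqS: "{z\<in>{c<..<c+L}. h z = 0 \<and> sign_change h z} = {z\<in>{0..<L}. h z = 0 \<and> sign_change h z}"
    using eqZ by blast
  have fin: "finite {z\<in>{c<..<c+L}. h z = 0}"
    using zeros_finite[OF cont loc, of c "c+L"] by (rule rev_finite_subset) auto
  have "h c * h (c + L) > 0" using hc hcL by (metis not_real_square_gt_zero)
  then show ?thesis using parity_interval[OF cont loc fin _ hc] hcL hc L eqS by simp
qed

lemma deriv_sc:
  fixes h :: "real \<Rightarrow> real"
  assumes hz: "h z = 0" and d: "DERIV h z :> D" and D: "D \<noteq> 0"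
  shows "sign_change h z"
proof (cases "D > 0")
  case True
  obtain d1 where d1: "d1 > 0" "\<forall>\<eta>>0. \<eta> < d1 \<longrightarrow> h z < h (z + \<eta>)" using DERIV_pos_inc_right[OF d True] by blast
  obtain d2 where d2: "d2 > 0" "\<forall>\<eta>>0. \<eta> < d2 \<longrightarrow> h (z - \<eta>) < h z" using DERIV_pos_inc_left[OF d True] by blast
  have "\<forall>t u. z - min d1 d2 < t \<and> t < z \<and> z < u \<and> u < z + min d1 d2 \<longrightarrow> h t * h u < 0"
  proof (intro allI impI)
    fix t u assume a: "z - min d1 d2 < t \<and> t < z \<and> z < u \<and> u < z + min d1 d2"
    have "h (z + (u - z)) > 0" using d1(2)[rule_format, of "u - z"] a hz by auto
    moreover have "h (z - (z - t)) < 0" using d2(2)[rule_format, of "z - t"] a hz by auto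
    ultimately show "h t * h u < 0" by (simp add: mult_neg_pos)
  qed
  then show ?thesis unfolding sign_change_def using d1 d2 by (metis min_less_iff_conj)
next
  case False
  then have Dn: "D < 0" using D by simp
  obtain d1 where d1: "d1 > 0" "\<forall>\<eta>>0. \<eta> < d1 \<longrightarrow> h z > h (z + \<eta>)" using DERIV_neg_dec_right[OF d Dn] by blast
  obtain d2 where d2: "d2 > 0" "\<forall>\<eta>>0. \<eta> < d2 \<longrightarrow> h z < h (z - \<eta>)" using DERIV_neg_dec_left[OF d Dn] by blast
  have "\<forall>t u. z - min d1 d2 < t \<and> t < z \<and> z < u \<and> u < z + min d1 d2 \<longrightarrow> h t * h u < 0"
  proof (intro allI impI)
    fix t u assume a: "z - min d1 d2 < t \<and> t < z \<and> z < u \<and> u < z + min d1 d2"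
    have "h (z + (u - z)) < 0" using d1(2)[rule_format, of "u - z"] a hz by auto
    moreover have "h (z - (z - t)) > 0" using d2(2)[rule_format, of "z - t"] a hz by auto
    ultimately show "h t * h u < 0" by (simp add: mult_pos_neg)
  qed
  then show ?thesis unfolding sign_change_def using d1 d2 by (metis min_less_iff_conj)
qed

lemma deriv2_sp_pos:
  fixes h h' :: "real \<Rightarrow> real"
  assumes hz: "h z = 0" and d: "\<And>y. DERIV h y :> h' y" and h'z: "h' z = 0"
    and d2: "DERIV h' z :> D" and D: "D > 0"
  shows "sp h z"
proof -
  obtain d1 where d1: "d1 > 0" "\<forall>\<eta>>0. \<eta> < d1 \<longrightarrow> h' z < h' (z + \<eta>)" using DERIV_pos_inc_right[OF d2 D] by blast
  obtain d2 where d2: "d2 > 0" "\<forall>\<eta>>0. \<eta> < d2 \<longrightarrow> h' (z - \<eta>) < h' z" using DERIV_pos_inc_left[OF d2 D] by blast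
  have "\<forall>t u. z - min d1 d2 < t \<and> t < z \<and> z < u \<and> u < z + min d1 d2 \<longrightarrow> h t * h u > 0"
  proof (intro allI impI)
    fix t u assume a: "z - min d1 d2 < t \<and> t < z \<and> z < u \<and> u < z + min d1 d2"
    obtain \<xi> where x1: "z < \<xi>" "\<xi> < u" "h u - h z = (u - z) * h' \<xi>" using MVT2[of z u h h'] d a by blast
    have "h' (z + (\<xi> - z)) > 0" using d1(2)[rule_format, of "\<xi> - z"] a x1 h'z by auto
    then have hu: "h u > 0" using x1 hz a by simp
    obtain \<zeta> where x2: "t < \<zeta>" "\<zeta> < z" "h z - h t = (z - t) * h' \<zeta>" using MVT2[of t z h h'] d a by blast
    have "h' (z - (z - \<zeta>)) < 0" using d2(2)[rule_format, of "z - \<zeta>"] a x2 h'z by auto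
    then have "(z - t) * h' \<zeta> < 0" using a by (simp add: mult_pos_neg)
    then have ht: "h t > 0" using x2 hz by simp
    show "h t * h u > 0" using hu ht by simp
  qed
  then show ?thesis unfolding sp_def using d1 d2 by (metis min_less_iff_conj)
qed

lemma deriv2_sp:
  fixes h h' :: "real \<Rightarrow> real"
  assumes hz: "h z = 0" and d: "\<And>y. DERIV h y :> h' y" and h'z: "h' z = 0"
    and d2: "DERIV h' z :> D" and D: "D \<noteq> 0"
  shows "sp h z"
proof (cases "D > 0")
  case True then show ?thesis using deriv2_sp_pos[OF hz d h'z d2] by blast
next
  case False
  have "sp (\<lambda>x. - h x) z"
    by (rule deriv2_sp_pos[where h'="\<lambda>x. - h' x" and D="-D"])
      (use hz h'z False D in \<open>auto intro: DERIV_minus d d2\<close>)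
  then show ?thesis unfolding sp_def by simp
qed

lemma derivF:
  assumes "smooth_curve f"
  shows "DERIV ((deriv ^^ k) (\<lambda>t. f t $ i)) s :> (deriv ^^ Suc k) (\<lambda>t. f t $ i) s"
  using assms unfolding smooth_curve_def
  by (simp add: DERIV_deriv_iff_real_differentiable)

lemma Dk_comp: "Dk k f s $ i = (deriv ^^ k) (\<lambda>t. f t $ i) s"
  by (simp add: Dk_def)

lemma det2_deriv:
  assumes "smooth_curve f"
  shows "DERIV (\<lambda>s. det2 (Dk k f s) v) s :> det2 (Dk (Suc k) f s) v"
proof -
  have d: "\<And>i. DERIV (\<lambda>s. Dk k f s $ i) s :> Dk (Suc k) f s $ i"
    unfolding Dk_comp by (rule derivF[OF assms])
  have "DERIV (\<lambda>s. Dk k f s $ 1 * v$2 - Dk k f s $ 2 * v$1) s :> Dk (Suc k) f s $ 1 * v$2 - Dk (Suc k) f s $ 2 * v$1"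
    by (intro DERIV_diff DERIV_cmult_right d)
  then show ?thesis unfolding det2_def .
qed

lemma contF:
  assumes "smooth_curve f"
  shows "continuous_on UNIV (\<lambda>s. Dk k f s $ i)"
proof -
  have "\<And>s. isCont (\<lambda>s. Dk k f s $ i) s"
    unfolding Dk_comp by (rule DERIV_isCont[OF derivF[OF assms]])
  then show ?thesis by (intro continuous_at_imp_continuous_on ballI)
qed

lemma cont_det2:
  assumes "smooth_curve f"
  shows "continuous_on UNIV (\<lambda>s. det2 (Dk k f s) v)"
  unfolding det2_def
  by (intro continuous_on_diff continuous_on_mult continuous_on_const contF[OF assms])

lemma cont_curv:
  assumes "smooth_curve f"
  shows "continuous_on UNIV (curvature f)"
proof -
  have e: "curvature f = (\<lambda>s. Dk 1 f s $ 1 * Dk 2 f s $ 2 - Dk 1 f s $ 2 * Dk 2 f s $ 1)"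
    by (auto simp: curvature_def det2_def)
  have "continuous_on UNIV (\<lambda>s. Dk 1 f s $ 1 * Dk 2 f s $ 2 - Dk 1 f s $ 2 * Dk 2 f s $ 1)"
    by (intro continuous_on_diff continuous_on_mult contF[OF assms])
  then show ?thesis unfolding e .
qed

lemma perF:
  assumes "arclength_closed_curve f L"
  shows "(deriv ^^ k) (\<lambda>t. f t $ i) (s + L) = (deriv ^^ k) (\<lambda>t. f t $ i) s"
proof (induction k arbitrary: s)
  case 0
  then show ?case using assms unfolding arclength_closed_curve_def by simp
next
  case (Suc k)
  define g where "g = (deriv ^^ k) (\<lambda>t. f t $ i)"
  have sm: "smooth_curve f" using assms arclength_closed_curve_def by blast
  have geq: "(\<lambda>t. g (t + L)) = g" using Suc g_def by auto
  have "DERIV g (s + L) :> (deriv ^^ Suc k) (\<lambda>t. f t $ i) (s + L)" using derivF[OF sm] g_def by simp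
  then have "DERIV (\<lambda>t. g (t + L)) s :> (deriv ^^ Suc k) (\<lambda>t. f t $ i) (s + L)" by (simp add: DERIV_shift)
  then have "DERIV g s :> (deriv ^^ Suc k) (\<lambda>t. f t $ i) (s + L)" using geq by simp
  moreover have "DERIV g s :> (deriv ^^ Suc k) (\<lambda>t. f t $ i) s" using derivF[OF sm] g_def by simp
  ultimately show ?case using DERIV_unique by blast
qed

lemma perDk:
  assumes "arclength_closed_curve f L"
  shows "Dk k f (s + L) = Dk k f s"
  using perF[OF assms] by (simp add: Dk_def)

lemma nz2: "(x::real^2) \<noteq> 0 \<Longrightarrow> x $ 1 \<noteq> 0 \<or> x $ 2 \<noteq> 0"
  by (metis exhaust_2 vec_eq_iff zero_index)

lemma alg:
  fixes u v w :: "real^2"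
  assumes "u \<noteq> 0" "v \<noteq> 0" "det2 u v = 0"
  shows "det2 w v = 0 \<longleftrightarrow> det2 u w = 0"
proof -
  have u: "u $ 1 \<noteq> 0 \<or> u $ 2 \<noteq> 0" and v: "v $ 1 \<noteq> 0 \<or> v $ 2 \<noteq> 0" using nz2 assms by auto
  have e: "u$1 * v$2 - u$2 * v$1 = 0" using assms(3) det2_def by simp
  have "u$1 * (w$1 * v$2 - w$2 * v$1) - v$1 * (w$1 * u$2 - w$2 * u$1) = w$1 * (u$1 * v$2 - u$2 * v$1)"
    by (simp add: algebra_simps)
  then have i1: "u$1 * (w$1 * v$2 - w$2 * v$1) = v$1 * (w$1 * u$2 - w$2 * u$1)"
    using e by simp
  have "u$2 * (w$1 * v$2 - w$2 * v$1) - v$2 * (w$1 * u$2 - w$2 * u$1) = w$2 * (u$1 * v$2 - u$2 * v$1)"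
    by (simp add: algebra_simps)
  then have i2: "u$2 * (w$1 * v$2 - w$2 * v$1) = v$2 * (w$1 * u$2 - w$2 * u$1)"
    using e by simp
  have Y: "(w$1 * u$2 - w$2 * u$1 = 0) = (u$1 * w$2 - u$2 * w$1 = 0)" by (auto simp: algebra_simps)
  show ?thesis unfolding det2_def Y[symmetric]
  proof (cases "u$1 = 0")
    case False
    have v1: "v$1 \<noteq> 0"
    proof
      assume "v$1 = 0"
      then have "u$1 * v$2 = 0" using e by simp
      then have "v$2 = 0" using False by simp
      then show False using v \<open>v$1 = 0\<close> by simp
    qed
    show "(w $ 1 * v $ 2 - w $ 2 * v $ 1 = 0) = (w$1 * u$2 - w$2 * u$1 = 0)"
      using i1 False v1 by (metis mult_eq_0_iff)
  next
    case True
    then have u2: "u$2 \<noteq> 0" using u by simp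
    have v2: "v$2 \<noteq> 0"
    proof
      assume "v$2 = 0"
      then have "u$2 * v$1 = 0" using e by simp
      then have "v$1 = 0" using u2 by simp
      then show False using v \<open>v$2 = 0\<close> by simp
    qed
    show "(w $ 1 * v $ 2 - w $ 2 * v $ 1 = 0) = (w$1 * u$2 - w$2 * u$1 = 0)"
      using i2 u2 v2 by (metis mult_eq_0_iff)
  qed
qed

lemma par_trans:
  fixes u a b :: "real^2"
  assumes "u \<noteq> 0" "det2 u a = 0" "det2 u b = 0"
  shows "det2 a b = 0"
proof -
  have u: "u $ 1 \<noteq> 0 \<or> u $ 2 \<noteq> 0" using nz2 assms by auto
  have e1: "u$1 * a$2 = u$2 * a$1" and e2: "u$1 * b$2 = u$2 * b$1" using assms det2_def by auto
  have "u$1 * (a$1 * b$2 - a$2 * b$1) = a$1 * (u$1 * b$2) - b$1 * (u$1 * a$2)"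
    by (simp add: algebra_simps)
  also have "\<dots> = 0" unfolding e1 e2 by (simp add: algebra_simps)
  finally have "u$1 * (a$1 * b$2 - a$2 * b$1) = 0" .
  moreover have "u$2 * (a$1 * b$2 - a$2 * b$1) = b$2 * (u$2 * a$1) - a$2 * (u$2 * b$1)"
    by (simp add: algebra_simps)
  moreover have "b$2 * (u$2 * a$1) - a$2 * (u$2 * b$1) = 0" unfolding e1[symmetric] e2[symmetric] by (simp add: algebra_simps)
  ultimately show ?thesis using u det2_def by auto
qed

lemma unit_nz:
  assumes "arclength_closed_curve f L"
  shows "Dk 1 f s \<noteq> 0"
  using assms unfolding arclength_closed_curve_def by (metis norm_zero zero_neq_one)

lemma loc_v:
  assumes A: "arclength_closed_curve f L" and G: "generic f L" and v: "v \<noteq> 0"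
    and hz: "det2 (Dk 1 f z) v = 0"
  shows "(curvature f z \<noteq> 0 \<longrightarrow> sign_change (\<lambda>s. det2 (Dk 1 f s) v) z) \<and>
         (curvature f z = 0 \<longrightarrow> sp (\<lambda>s. det2 (Dk 1 f s) v) z)"
proof -
  have sm: "smooth_curve f" using A arclength_closed_curve_def by blast
  have u: "Dk 1 f z \<noteq> 0" using unit_nz[OF A] .
  have k2: "det2 (Dk 2 f z) v = 0 \<longleftrightarrow> curvature f z = 0"
    using alg[OF u v hz] curvature_def by simp
  have k3: "det2 (Dk 3 f z) v = 0 \<longleftrightarrow> det2 (Dk 1 f z) (Dk 3 f z) = 0"
    using alg[OF u v hz] by simp
  have d1: "\<And>y. DERIV (\<lambda>s. det2 (Dk 1 f s) v) y :> det2 (Dk 2 f y) v"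
    using det2_deriv[OF sm, of 1] by (simp add: numeral_2_eq_2)
  have d2: "DERIV (\<lambda>s. det2 (Dk 2 f s) v) z :> det2 (Dk 3 f z) v"
    using det2_deriv[OF sm, of 2] by (simp add: numeral_3_eq_3 numeral_2_eq_2)
  show ?thesis
  proof (intro conjI impI)
    assume "curvature f z \<noteq> 0"
    then show "sign_change (\<lambda>s. det2 (Dk 1 f s) v) z"
      using deriv_sc[OF _ d1] hz k2 by blast
  next
    assume c: "curvature f z = 0"
    then have "det2 (Dk 1 f z) (Dk 3 f z) \<noteq> 0" using G generic_def by blast
    then have "det2 (Dk 3 f z) v \<noteq> 0" using k3 by simp
    then show "sp (\<lambda>s. det2 (Dk 1 f s) v) z"
      using deriv2_sp[OF _ d1 _ d2] hz k2 c by blast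
  qed
qed

lemma sc_sp_excl: "\<not> (sign_change h z \<and> sp h z)"
proof
  assume "sign_change h z \<and> sp h z"
  then obtain e1 e2 where e1: "e1 > 0" "\<forall>t u. z - e1 < t \<and> t < z \<and> z < u \<and> u < z + e1 \<longrightarrow> h t * h u < 0"
    and e2: "e2 > 0" "\<forall>t u. z - e2 < t \<and> t < z \<and> z < u \<and> u < z + e2 \<longrightarrow> h t * h u > 0"
    unfolding sign_change_def sp_def by blast
  define m where "m = min e1 e2"
  have "m > 0" "m \<le> e1" "m \<le> e2" using e1 e2 m_def by auto
  then have "h (z - m/2) * h (z + m/2) < 0" "h (z - m/2) * h (z + m/2) > 0"
    using e1(2)[rule_format, of "z - m/2" "z + m/2"] e2(2)[rule_format, of "z - m/2" "z + m/2"] by auto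
  then show False by simp
qed

lemma sum_odd:
  assumes "finite I" "\<forall>i\<in>I. odd (g i :: nat)"
  shows "even (sum g I) \<longleftrightarrow> even (card I)"
  using assms by (induction I rule: finite_induct) auto

lemma loc_all:
  assumes A: "arclength_closed_curve f L" and G: "generic f L" and v: "v \<noteq> 0"
  shows "\<forall>z. det2 (Dk 1 f z) v = 0 \<longrightarrow> sign_change (\<lambda>s. det2 (Dk 1 f s) v) z \<or> sp (\<lambda>s. det2 (Dk 1 f s) v) z"
  using loc_v[OF A G v] by blast

lemma per_h:
  assumes A: "arclength_closed_curve f L"
  shows "\<forall>s. det2 (Dk 1 f (s + L)) v = det2 (Dk 1 f s) v"
  using perDk[OF A] by simp

lemma fin_h:
  assumes A: "arclength_closed_curve f L" and G: "generic f L" and v: "v \<noteq> 0"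
  shows "finite {s\<in>{0..<L}. det2 (Dk 1 f s) v = 0}"
proof -
  have sm: "smooth_curve f" using A arclength_closed_curve_def by blast
  have "finite {s\<in>{0..L}. det2 (Dk 1 f s) v = 0}"
    using zeros_finite[OF cont_det2[OF sm] loc_all[OF A G v]] by simp
  then show ?thesis by (rule rev_finite_subset) auto
qed

lemma no_par_infl:
  assumes G: "generic f L" and "s \<in> {0..<L}" "t \<in> {0..<L}" "s \<noteq> t" "inflexion f s" "inflexion f t"
  shows "det2 (Dk 1 f s) (Dk 1 f t) \<noteq> 0"
  using assms unfolding generic_def by (cases "f s = f t") blast+

theorem corollary3p9:
  fixes f :: "real \<Rightarrow> real^2" and L s0 :: real
  assumes "arclength_closed_curve f L"
    and "generic f L"
  shows "finite (division_points f L s0) \<and> even (card (division_points f L s0))"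
proof -
  note A = assms(1) and G = assms(2)
  have sm: "smooth_curve f" and L: "L > 0" using A arclength_closed_curve_def by auto
  show ?thesis
  proof (cases "\<exists>t\<in>{0..<L}. inflexion f t")
    case False
    define v where "v = Dk 1 f s0"
    have v: "v \<noteq> 0" using unit_nz[OF A] v_def by simp
    have D: "division_points f L s0 = {s\<in>{0..<L}. det2 (Dk 1 f s) v = 0}"
      using False v_def division_points_def by simp
    have fin: "finite (division_points f L s0)" using D fin_h[OF A G v] by simp
    have "{s\<in>{0..<L}. det2 (Dk 1 f s) v = 0} =
          {s\<in>{0..<L}. det2 (Dk 1 f s) v = 0 \<and> sign_change (\<lambda>s. det2 (Dk 1 f s) v) s}"
    proof -
      have "\<And>s. s \<in> {0..<L} \<Longrightarrow> det2 (Dk 1 f s) v = 0 \<Longrightarrow> sign_change (\<lambda>s. det2 (Dk 1 f s) v) s"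
      proof -
        fix s assume s: "s \<in> {0..<L}" "det2 (Dk 1 f s) v = 0"
        have "curvature f s \<noteq> 0"
        proof
          assume "curvature f s = 0"
          then have "inflexion f s" using G generic_def by blast
          then show False using False s by blast
        qed
        then show "sign_change (\<lambda>s. det2 (Dk 1 f s) v) s" using loc_v[OF A G v s(2)] by blast
      qed
      then show ?thesis by blast
    qed
    moreover have "even (card {s\<in>{0..<L}. det2 (Dk 1 f s) v = 0 \<and> sign_change (\<lambda>s. det2 (Dk 1 f s) v) s})"
      using parity_periodic[OF cont_det2[OF sm] loc_all[OF A G v] L per_h[OF A]] by simp
    ultimately show ?thesis using fin D by simp
  next
    case True
    define I where "I = {t\<in>{0..<L}. inflexion f t}"
    define Z where "Z = (\<lambda>t. {s\<in>{0..<L}. det2 (Dk 1 f s) (Dk 1 f t) = 0})"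
    have locK: "\<forall>z. curvature f z = 0 \<longrightarrow> sign_change (curvature f) z \<or> sp (curvature f) z"
      using G unfolding generic_def inflexion_def by blast
    have perK: "\<forall>s. curvature f (s + L) = curvature f s"
      using perDk[OF A] curvature_def by simp
    have I_eq: "I = {z\<in>{0..<L}. curvature f z = 0 \<and> sign_change (curvature f) z}"
      using I_def inflexion_def by auto
    have evI: "even (card I)"
      using parity_periodic[OF cont_curv[OF sm] locK L perK] I_eq by simp
    have finI: "finite I"
    proof -
      have "finite {z\<in>{0..L}. curvature f z = 0}" using zeros_finite[OF cont_curv[OF sm] locK] by simp
      then show ?thesis by (rule rev_finite_subset) (auto simp: I_def inflexion_def)
    qed
    have finZ: "\<And>t. finite (Z t)" using fin_h[OF A G unit_nz[OF A]] Z_def by simp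
    have Deq: "division_points f L s0 = (\<Union>t\<in>I. Z t)"
    proof -
      have "division_points f L s0 = {s\<in>{0..<L}. inflexion f s \<or>
              (\<exists>t\<in>{0..<L}. inflexion f t \<and> det2 (Dk 1 f s) (Dk 1 f t) = 0)}"
        using True division_points_def by simp
      moreover have "\<And>s. det2 (Dk 1 f s) (Dk 1 f s) = 0" by (simp add: det2_def)
      ultimately show ?thesis using I_def Z_def by auto
    qed
    have disj: "\<forall>i\<in>I. \<forall>j\<in>I. i \<noteq> j \<longrightarrow> Z i \<inter> Z j = {}"
    proof (intro ballI impI)
      fix i j assume ij: "i \<in> I" "j \<in> I" "i \<noteq> j"
      show "Z i \<inter> Z j = {}"
      proof (rule ccontr)
        assume "Z i \<inter> Z j \<noteq> {}"
        then obtain s where "det2 (Dk 1 f s) (Dk 1 f i) = 0" "det2 (Dk 1 f s) (Dk 1 f j) = 0"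
          using Z_def by auto
        then have "det2 (Dk 1 f i) (Dk 1 f j) = 0" using par_trans unit_nz[OF A] by blast
        then show False using no_par_infl[OF G] ij I_def by blast
      qed
    qed
    have oddZ: "\<forall>t\<in>I. odd (card (Z t))"
    proof
      fix t assume t: "t \<in> I"
      define v where "v = Dk 1 f t"
      have v: "v \<noteq> 0" using unit_nz[OF A] v_def by simp
      define h where "h = (\<lambda>s. det2 (Dk 1 f s) v)"
      have tZ: "t \<in> Z t" using t I_def Z_def by (auto simp: det2_def)
      have kt: "curvature f t = 0" using t I_def inflexion_def by auto
      have "sp h t" using loc_v[OF A G v] kt h_def v_def by (simp add: det2_def)
      then have tnsc: "\<not> sign_change h t" using sc_sp_excl by blast
      have eqS: "{z\<in>{0..<L}. h z = 0 \<and> sign_change h z} = Z t - {t}"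
      proof
        show "{z\<in>{0..<L}. h z = 0 \<and> sign_change h z} \<subseteq> Z t - {t}"
          using tnsc h_def Z_def v_def by auto
        show "Z t - {t} \<subseteq> {z\<in>{0..<L}. h z = 0 \<and> sign_change h z}"
        proof
          fix s assume s: "s \<in> Z t - {t}"
          then have s1: "s \<in> {0..<L}" "h s = 0" "s \<noteq> t" using Z_def h_def v_def by auto
          have "\<not> inflexion f s"
          proof
            assume "inflexion f s"
            then have "det2 (Dk 1 f s) (Dk 1 f t) \<noteq> 0" using no_par_infl[OF G] s1 t I_def by blast
            then show False using s1 h_def v_def by simp
          qed
          then have "curvature f s \<noteq> 0" using G generic_def by blast
          then have "sign_change h s" using loc_v[OF A G v] s1 h_def by blast
          then show "s \<in> {z\<in>{0..<L}. h z = 0 \<and> sign_change h z}" using s1 by simp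
        qed
      qed
      have "even (card {z\<in>{0..<L}. h z = 0 \<and> sign_change h z})"
        using parity_periodic[OF cont_det2[OF sm] loc_all[OF A G v] L per_h[OF A]] h_def by simp
      then have "even (card (Z t - {t}))" using eqS by simp
      moreover have "card (Z t) = Suc (card (Z t - {t}))" using tZ finZ
        by (metis card_Suc_Diff1)
      ultimately show "odd (card (Z t))" by simp
    qed
    have "card (division_points f L s0) = (\<Sum>t\<in>I. card (Z t))"
      using Deq card_UN_disjoint[OF finI _ disj] finZ by simp
    then have "even (card (division_points f L s0))" using sum_odd[OF finI oddZ] evI by simp
    moreover have "finite (division_points f L s0)" using Deq finI finZ by simp
    ultimately show ?thesis by simp
  qed
qed

end
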